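(* Let $a,b,c\in\mathbb{R}$ and $P_2:\ell_\infty^2(\mathbb{C})\to\mathbb{C}$, $P_2(z_1,z_2)=az_1^2+bz_2^2+cz_1z_2$. Then $$\|P_2\|=\begin{cases}|a+b|+|c| & \text{if } ab\ge0 \text{ or } |c(a+b)|>4|ab|,\\[2pt] (|a|+|b|)\sqrt{1+\dfrac{c^2}{4|ab|}} & \text{otherwise.}\end{cases}$$
   Context: $\ell_\infty^2(\mathbb{C})$ is $\mathbb{C}^2$ with the sup norm, and $\|P_2\|=\sup\{|P_2(z_1,z_2)|:|z_1|\le1,|z_2|\le1\}$. *)

theory Defs
  imports "HOL-Analysis.Analysis"
begin

definition P2 :: "real \<Rightarrow> real \<Rightarrow> real \<Rightarrow> complex \<Rightarrow> complex \<Rightarrow> complex" where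
  "P2 a b c z1 z2 = of_real a * z1^2 + of_real b * z2^2 + of_real c * z1 * z2"

definition poly_norm2 :: "(complex \<Rightarrow> complex \<Rightarrow> complex) \<Rightarrow> real" where
  "poly_norm2 P = (SUP z \<in> {z :: complex \<times> complex. norm (fst z) \<le> 1 \<and> norm (snd z) \<le> 1}.
                     norm (P (fst z) (snd z)))"

end

theory Submission
  imports Defs
begin

definition MM :: "real \<Rightarrow> real \<Rightarrow> real \<Rightarrow> real" where
  "MM a b c = (if a * b \<ge> 0 \<or> \<bar>c * (a + b)\<bar> > 4 * \<bar>a * b\<bar>
     then \<bar>a + b\<bar> + \<bar>c\<bar>
     else (\<bar>a\<bar> + \<bar>b\<bar>) * sqrt (1 + c^2 / (4 * \<bar>a * b\<bar>)))"

lemma MM_sym: "MM b a c = MM a b c"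
proof -
  have "b*a=a*b" "b+a=a+b" "\<bar>b\<bar>+\<bar>a\<bar> = \<bar>a\<bar>+\<bar>b\<bar>" by simp_all
  thus ?thesis unfolding MM_def by (simp only:)
qed

lemma MM_nonneg: "MM a b c \<ge> 0"
proof -
  have "0 \<le> (\<bar>a\<bar> + \<bar>b\<bar>) * sqrt (1 + c^2 / (4 * \<bar>a * b\<bar>))"
    by (intro mult_nonneg_nonneg real_sqrt_ge_zero add_nonneg_nonneg divide_nonneg_nonneg) auto
  thus ?thesis unfolding MM_def
    by (simp only: if_split) (intro conjI impI; simp_all)
qed

lemma circle_sq:
  fixes a b c x y :: real assumes h: "x^2+y^2=1"
  shows "(cmod (of_real a * (Complex x y)^2 + of_real c * Complex x y + of_real b))^2
         = ((a+b)*x+c)^2 + (a-b)^2*(1-x^2)"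
proof -
  have e: "of_real a * (Complex x y)^2 + of_real c * Complex x y + of_real b
      = Complex (a*(x^2-y^2)+c*x+b) (2*a*x*y+c*y)"
    by (simp add: complex_eq_iff power2_eq_square algebra_simps)
  have y2: "y^2 = 1 - x^2" using h by simp
  have "(cmod (Complex (a*(x^2-y^2)+c*x+b) (2*a*x*y+c*y)))^2
      = (a*(x^2-y^2)+c*x+b)^2 + y^2*(2*a*x+c)^2"
  proof -
    have "2*a*x*y+c*y = y*(2*a*x+c)" by (simp add: algebra_simps)
    thus ?thesis by (simp add: cmod_power2 power_mult_distrib)
  qed
  also have "\<dots> = (a*(x^2-(1-x^2))+c*x+b)^2 + (1-x^2)*(2*a*x+c)^2" by (simp add: y2)
  also have "\<dots> = ((a+b)*x+c)^2 + (a-b)^2*(1-x^2)"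
    by (simp add: power2_eq_square algebra_simps)
  finally show ?thesis using e by simp
qed

lemma real_bound:
  fixes a b c x :: real assumes x: "\<bar>x\<bar> \<le> 1"
  shows "((a+b)*x+c)^2 + (a-b)^2*(1-x^2) \<le> (MM a b c)^2"
proof -
  have x2: "x^2 \<le> 1" using x abs_le_square_iff[of x 1] by simp
  have xx: "x^2 = \<bar>x\<bar>^2" by simp
  show ?thesis
  proof (cases "a * b \<ge> 0")
    case True
    have "(a-b)^2 \<le> (a+b)^2" using True by (simp add: power2_eq_square algebra_simps)
    hence "(a-b)^2*(1-x^2) \<le> (a+b)^2*(1-x^2)" using x2 by (intro mult_right_mono) auto
    moreover have "(a+b)*c*x \<le> \<bar>a+b\<bar>*\<bar>c\<bar>"
    proof -
      have "(a+b)*c*x \<le> \<bar>(a+b)*c*x\<bar>" by simp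
      also have "\<dots> = \<bar>a+b\<bar>*\<bar>c\<bar>*\<bar>x\<bar>" by (simp add: abs_mult)
      also have "\<dots> \<le> \<bar>a+b\<bar>*\<bar>c\<bar>" using x by (simp add: mult_left_le)
      finally show ?thesis .
    qed
    ultimately have "((a+b)*x+c)^2 + (a-b)^2*(1-x^2) \<le> (\<bar>a+b\<bar> + \<bar>c\<bar>)^2"
      by (simp add: power2_eq_square algebra_simps)
    thus ?thesis using True by (simp add: MM_def)
  next
    case False
    define m where "m = - (a*b)"
    have m: "m > 0" using False m_def by simp
    have am: "\<bar>a*b\<bar> = m" using m m_def by simp
    show ?thesis
    proof (cases "\<bar>c * (a + b)\<bar> > 4 * \<bar>a * b\<bar>")
      case True
      define K where "K = \<bar>c*(a+b)\<bar>"
      have K: "K > 4*m" using True am K_def by simp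
      have cx: "c*(a+b)*x \<le> K*\<bar>x\<bar>"
      proof -
        have "c*(a+b)*x \<le> \<bar>c*(a+b)*x\<bar>" by simp
        thus ?thesis by (simp add: K_def abs_mult)
      qed
      define t where "t = \<bar>x\<bar>"
      have t: "0 \<le> t" "t \<le> 1" "x^2 = t^2" using x by (auto simp: t_def)
      have "0 \<le> 2*(1-t)*(K-2*m*(1+t))"
      proof -
        have "2*m*(1+t) \<le> 4*m" using t m by simp
        thus ?thesis using t K by (intro mult_nonneg_nonneg) auto
      qed
      also have "\<dots> = -4*m*(1-t^2) + 2*K - 2*K*t"
        by (simp add: power2_eq_square algebra_simps)
      finally have f1: "0 \<le> -4*m*(1-t^2) + 2*K - 2*K*t" .
      have "c*(a+b)*x \<le> K*t" using cx unfolding t_def .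
      moreover have "m*x^2 = m*t^2" using t by simp
      moreover have "-4*m*(1-x^2) + 2*K - 2*c*(a+b)*x = -4*m + 4*(m*x^2) + 2*K - 2*(c*(a+b)*x)"
        by (simp add: algebra_simps)
      moreover have "-4*m*(1-t^2) + 2*K - 2*K*t = -4*m + 4*(m*t^2) + 2*K - 2*(K*t)"
        by (simp add: algebra_simps)
      ultimately have "0 \<le> -4*m*(1-x^2) + 2*K - 2*c*(a+b)*x" using f1
        by linarith
      moreover have "(\<bar>a+b\<bar> + \<bar>c\<bar>)^2 = (a+b)^2 + 2*K + c^2"
        unfolding K_def by (simp add: power2_sum abs_mult)
      moreover have "((a+b)*x+c)^2 + (a-b)^2*(1-x^2) = (a+b)^2 + 2*c*(a+b)*x + c^2 + 4*m*(1-x^2)"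
        unfolding m_def by (simp add: power2_eq_square algebra_simps)
      ultimately have "((a+b)*x+c)^2 + (a-b)^2*(1-x^2) \<le> (\<bar>a+b\<bar> + \<bar>c\<bar>)^2"
        by linarith
      thus ?thesis using True by (simp add: MM_def)
    next
      case F2: False
      have ab: "(\<bar>a\<bar>+\<bar>b\<bar>)^2 = (a-b)^2"
        using m_def m am by (simp add: power2_eq_square algebra_simps abs_mult[symmetric])
      have MM2: "(MM a b c)^2 = (a-b)^2 * (1 + c^2/(4*m))"
        using False F2 am ab by (simp add: MM_def power_mult_distrib)
      have "4*m*((MM a b c)^2 - (((a+b)*x+c)^2 + (a-b)^2*(1-x^2))) = (c*(a+b) - 4*m*x)^2"
      proof -
        have nz: "a \<noteq> 0" "b \<noteq> 0" using m m_def by auto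
        show ?thesis unfolding MM2 using m nz unfolding m_def
          by (simp add: field_simps power2_eq_square)
      qed
      hence "0 \<le> 4*m*((MM a b c)^2 - (((a+b)*x+c)^2 + (a-b)^2*(1-x^2)))" by simp
      thus ?thesis using m by (simp add: zero_le_mult_iff)
    qed
  qed
qed

lemma circle_bound:
  fixes v :: complex assumes "cmod v = 1"
  shows "cmod (of_real a * v^2 + of_real c * v + of_real b) \<le> MM a b c"
proof -
  have v: "v = Complex (Re v) (Im v)" by simp
  have h: "(Re v)^2 + (Im v)^2 = 1" using assms cmod_power2[of v] by simp
  hence "(Re v)^2 \<le> 1" by (metis le_add_same_cancel1 zero_le_power2)
  hence "\<bar>Re v\<bar> \<le> 1" using abs_le_square_iff[of "Re v" 1] by simp
  have "(cmod (of_real a * v^2 + of_real c * v + of_real b))^2 \<le> (MM a b c)^2"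
    using circle_sq[OF h, of a c b] real_bound[OF \<open>\<bar>Re v\<bar> \<le> 1\<close>, of a b c] v by simp
  thus ?thesis using MM_nonneg by (rule power2_le_imp_le)
qed

lemma identC:
  fixes a b c x :: real
  assumes ab: "a*b < 0" and F2: "\<not> \<bar>c * (a + b)\<bar> > 4 * \<bar>a * b\<bar>"
  shows "4*(-(a*b))*((MM a b c)^2 - (((a+b)*x+c)^2 + (a-b)^2*(1-x^2))) = (c*(a+b) - 4*(-(a*b))*x)^2"
proof -
  define m where "m = - (a*b)"
  have m: "m > 0" using ab m_def by simp
  have am: "\<bar>a*b\<bar> = m" using m m_def by simp
  have ab2: "(\<bar>a\<bar>+\<bar>b\<bar>)^2 = (a-b)^2"
    using m_def m am by (simp add: power2_eq_square algebra_simps abs_mult[symmetric])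
  have MM2: "(MM a b c)^2 = (a-b)^2 * (1 + c^2/(4*m))"
    using ab F2 am ab2 by (simp add: MM_def power_mult_distrib)
  have nz: "a \<noteq> 0" "b \<noteq> 0" using m m_def by auto
  have "4*m*((MM a b c)^2 - (((a+b)*x+c)^2 + (a-b)^2*(1-x^2))) = (c*(a+b) - 4*m*x)^2"
    unfolding MM2 using m nz unfolding m_def
    by (simp add: field_simps power2_eq_square)
  thus ?thesis unfolding m_def .
qed

lemma comb:
  fixes A B C w u1 u2 u3 l1 l2 l3 :: complex
  assumes "l1+l2+l3 = 1" "l1*u1+l2*u2+l3*u3 = w" "l1*u1^2+l2*u2^2+l3*u3^2 = w^2"
  shows "A*w^2+B*w+C = l1*(A*u1^2+B*u1+C) + l2*(A*u2^2+B*u2+C) + l3*(A*u3^2+B*u3+C)"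
proof -
  have "l1*(A*u1^2+B*u1+C) + l2*(A*u2^2+B*u2+C) + l3*(A*u3^2+B*u3+C)
      = A*(l1*u1^2+l2*u2^2+l3*u3^2) + B*(l1*u1+l2*u2+l3*u3) + C*(l1+l2+l3)"
    by (simp add: algebra_simps)
  thus ?thesis using assms by simp
qed

lemma disk_bound:
  fixes w :: complex assumes w1: "cmod w \<le> 1"
  shows "cmod (of_real a * w^2 + of_real c * w + of_real b) \<le> MM a b c"
proof -
  define q where "q z = of_real a * z^2 + of_real c * z + of_real b" for z :: complex
  define r where "r = cmod w"
  define e where "e = (if w = 0 then 1 else w / of_real r)"
  have r: "0 \<le> r" "r \<le> 1" using w1 by (auto simp: r_def)
  have e1: "cmod e = 1" by (auto simp: e_def r_def norm_divide)
  have we: "w = of_real r * e" by (auto simp: e_def r_def)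
  define cc where "cc = (r-1)/2"
  define ss where "ss = sqrt(1-cc^2)"
  have "\<bar>cc\<bar> \<le> 1" using r by (simp add: cc_def)
  hence cc1: "cc^2 \<le> 1" using abs_le_square_iff[of cc 1] by simp
  have ss2: "ss * ss = 1 - cc * cc" using cc1 unfolding ss_def
    by (metis diff_ge_0_iff_ge power2_eq_square real_sqrt_pow2)
  define u where "u = Complex cc ss"
  have "(cmod u)^2 = cc^2 + ss^2" by (simp add: u_def cmod_power2)
  hence "(cmod u)^2 = 1" using ss2 by (simp add: power2_eq_square)
  hence u1: "cmod u = 1" using norm_ge_zero[of u] by (auto simp: power2_eq_1_iff)
  have uc: "u + cnj u = of_real (2*cc)" by (simp add: u_def complex_eq_iff)
  have uc2: "u^2 + (cnj u)^2 = of_real (2*(2*cc^2-1))"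
    by (simp add: u_def complex_eq_iff power2_eq_square ss2)
  define l where "l = (1-r)/(3-r)"
  define mu where "mu = (1+r)/(3-r)"
  have r3: "3 - r > 0" using r by simp
  have l: "0 \<le> l" "0 \<le> mu" using r r3 by (auto simp: l_def mu_def)
  have lA: "(3-r)*l = 1-r" "(3-r)*mu = 1+r" using r3 by (simp_all add: l_def mu_def)
  have "(3-r)*(2*l + mu) = 2*((3-r)*l) + (3-r)*mu" by (simp add: algebra_simps)
  also have "\<dots> = (3-r)*1" unfolding lA by simp
  finally have l1: "2*l + mu = 1" using r3 by simp
  have c2: "2*cc = r-1" by (simp add: cc_def)
  have "(3-r)*(2*l*cc + mu) = (2*cc)*((3-r)*l) + (3-r)*mu" by (simp add: algebra_simps)
  also have "\<dots> = (r-1)*(1-r) + (1+r)" unfolding lA c2 by simp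
  also have "\<dots> = (3-r)*r" by (simp add: algebra_simps)
  finally have l2: "2*l*cc + mu = r" using r3 by simp
  have c3: "2*(2*cc^2-1) = (r-1)^2 - 2" unfolding c2[symmetric] by (simp add: power2_eq_square algebra_simps)
  have "(3-r)*(2*l*(2*cc^2-1) + mu) = (2*(2*cc^2-1))*((3-r)*l) + (3-r)*mu" by (simp add: algebra_simps)
  also have "\<dots> = ((r-1)^2 - 2)*(1-r) + (1+r)" unfolding lA c3 by simp
  also have "\<dots> = (3-r)*r^2" by (simp add: algebra_simps power2_eq_square)
  finally have l3: "2*l*(2*cc^2-1) + mu = r^2" using r3 by simp
  have m1: "of_real l * (e*u) + of_real l * (e * cnj u) + of_real mu * e = w"
  proof -
    have "of_real l * (e*u) + of_real l * (e * cnj u) + of_real mu * e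
        = e * (of_real l * (u + cnj u) + of_real mu)" by (simp add: algebra_simps)
    also have "\<dots> = e * of_real (2*l*cc + mu)" by (simp add: uc)
    also have "\<dots> = w" unfolding l2 we by (simp add: mult.commute)
    finally show ?thesis .
  qed
  have m2: "of_real l * (e*u)^2 + of_real l * (e * cnj u)^2 + of_real mu * e^2 = w^2"
  proof -
    have "of_real l * (e*u)^2 + of_real l * (e * cnj u)^2 + of_real mu * e^2
        = e^2 * (of_real l * (u^2 + (cnj u)^2) + of_real mu)" by (simp add: algebra_simps power_mult_distrib)
    also have "\<dots> = e^2 * of_real (2*l*(2*cc^2-1) + mu)" by (simp add: uc2)
    also have "\<dots> = w^2" unfolding l3 we by (simp add: power_mult_distrib mult.commute)
    finally show ?thesis .
  qed
  have m0: "of_real l + of_real l + of_real mu = (1::complex)"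
  proof -
    have "l+l+mu = 1" using l1 by simp
    hence "of_real (l+l+mu) = (1::complex)" by simp
    thus ?thesis by simp
  qed
  have qw: "q w = of_real l * q (e*u) + of_real l * q (e * cnj u) + of_real mu * q e"
    unfolding q_def by (rule comb[OF m0 m1 m2])
  have n1: "cmod (e*u) = 1" "cmod (e * cnj u) = 1" using e1 u1 by (simp_all add: norm_mult)
  have b1: "cmod (q (e*u)) \<le> MM a b c" "cmod (q (e*cnj u)) \<le> MM a b c" "cmod (q e) \<le> MM a b c"
    unfolding q_def using circle_bound[OF n1(1)] circle_bound[OF n1(2)] circle_bound[OF e1] by auto
  have "cmod (q w) \<le> cmod (of_real l * q (e*u)) + cmod (of_real l * q (e * cnj u)) + cmod (of_real mu * q e)"
    unfolding qw by (meson add_right_mono norm_triangle_ineq order_trans)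
  also have "\<dots> = l * cmod (q (e*u)) + l * cmod (q (e * cnj u)) + mu * cmod (q e)"
    using l by (simp add: norm_mult)
  also have "\<dots> \<le> l * MM a b c + l * MM a b c + mu * MM a b c"
    using l b1 by (intro add_mono mult_left_mono) auto
  also have "\<dots> = (2*l+mu) * MM a b c" by (simp add: algebra_simps)
  also have "\<dots> = MM a b c" using l1 by simp
  finally show ?thesis unfolding q_def .
qed

lemma bidisk_half:
  assumes "cmod z1 \<le> cmod z2" "cmod z2 \<le> 1"
  shows "cmod (P2 a b c z1 z2) \<le> MM a b c"
proof (cases "z2 = 0")
  case True
  then have "z1 = 0" using assms by simp
  thus ?thesis using True MM_nonneg by (simp add: P2_def)
next
  case False
  define w where "w = z1 / z2"
  have w1: "cmod w \<le> 1" using assms False by (simp add: w_def norm_divide divide_le_eq_1)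
  have "P2 a b c z1 z2 = z2^2 * (of_real a * w^2 + of_real c * w + of_real b)"
    using False by (simp add: P2_def w_def field_simps power2_eq_square)
  hence "cmod (P2 a b c z1 z2) = (cmod z2)^2 * cmod (of_real a * w^2 + of_real c * w + of_real b)"
    by (simp add: norm_mult norm_power)
  also have "\<dots> \<le> 1 * MM a b c"
    using disk_bound[OF w1, of a c b] assms by (intro mult_mono power_le_one) auto
  finally show ?thesis by simp
qed

lemma bidisk:
  assumes "cmod z1 \<le> 1" "cmod z2 \<le> 1"
  shows "cmod (P2 a b c z1 z2) \<le> MM a b c"
proof (cases "cmod z1 \<le> cmod z2")
  case True thus ?thesis using bidisk_half assms by blast
next
  case False
  have "P2 a b c z1 z2 = P2 b a c z2 z1" by (simp add: P2_def algebra_simps)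
  thus ?thesis using bidisk_half[of z2 z1 b a c] False assms MM_sym by simp
qed

lemma abs_add_same: "(x::real)*y \<ge> 0 \<Longrightarrow> \<bar>x+y\<bar> = \<bar>x\<bar>+\<bar>y\<bar>"
  by (auto simp: zero_le_mult_iff abs_if)

lemma wit1: "\<exists>z1 z2. cmod z1 \<le> 1 \<and> cmod z2 \<le> 1 \<and> cmod (P2 a b c z1 z2) = \<bar>a+b\<bar>+\<bar>c\<bar>"
proof -
  define s :: real where "s = (if c*(a+b) \<ge> 0 then 1 else -1)"
  have s2: "s^2 = 1" by (simp add: s_def)
  have sq: "(of_real s :: complex)^2 = 1" by (metis of_real_1 of_real_power s2)
  have "P2 a b c 1 (of_real s) = of_real ((a+b) + c * s)" using sq by (simp add: P2_def)
  hence "cmod (P2 a b c 1 (of_real s)) = \<bar>(a+b) + c * s\<bar>" by (simp only: norm_of_real)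
  also have "\<dots> = \<bar>a+b\<bar> + \<bar>c * s\<bar>"
    by (rule abs_add_same) (auto simp: s_def algebra_simps)
  also have "\<bar>c * s\<bar> = \<bar>c\<bar>" by (simp add: s_def)
  finally show ?thesis by (intro exI[of _ 1] exI[of _ "of_real s"]) (simp add: s_def)
qed

lemma wit2:
  assumes ab: "a*b < 0" and F2: "\<not> \<bar>c * (a + b)\<bar> > 4 * \<bar>a * b\<bar>"
  shows "\<exists>z1 z2. cmod z1 \<le> 1 \<and> cmod z2 \<le> 1 \<and> cmod (P2 a b c z1 z2) = MM a b c"
proof -
  define m where "m = -(a*b)"
  have m: "m > 0" using ab m_def by simp
  define t where "t = c*(a+b)/(4*m)"
  have am: "\<bar>a*b\<bar> = m" using m m_def by simp
  have K: "\<bar>c*(a+b)\<bar> \<le> 4*m" using F2 am by simp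
  have "\<bar>t\<bar> = \<bar>c*(a+b)\<bar>/(4*m)" using m unfolding t_def by (simp only: abs_divide)
  hence "\<bar>t\<bar> \<le> 1" using K m by (simp add: divide_le_eq_1)
  hence t1: "t^2 \<le> 1" using abs_le_square_iff[of t 1] by simp
  define s where "s = sqrt (1 - t^2)"
  have s2: "t^2 + s^2 = 1" using t1 by (simp add: s_def)
  define v where "v = Complex t s"
  have "(cmod v)^2 = 1" using s2 by (simp add: v_def cmod_power2)
  hence v1: "cmod v = 1" using norm_ge_zero[of v] by (auto simp: power2_eq_1_iff)
  have P: "P2 a b c v 1 = of_real a * v^2 + of_real c * v + of_real b" by (simp add: P2_def)
  have mt: "4*m*t = c*(a+b)" using m by (simp add: t_def)
  have "4*m*((MM a b c)^2 - (((a+b)*t+c)^2 + (a-b)^2*(1-t^2))) = 0"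
    using identC[OF ab F2, of t] mt unfolding m_def by simp
  hence "(MM a b c)^2 = ((a+b)*t+c)^2 + (a-b)^2*(1-t^2)" using m by simp
  hence "(cmod (P2 a b c v 1))^2 = (MM a b c)^2"
    using circle_sq[OF s2, of a c b] P v_def by simp
  hence "cmod (P2 a b c v 1) = MM a b c"
    using MM_nonneg by (simp add: power2_eq_iff_nonneg)
  thus ?thesis using v1 by (intro exI[of _ v] exI[of _ 1]) simp
qed

theorem mainTheorem11:
  fixes a b c :: real
  shows "poly_norm2 (P2 a b c) =
    (if a * b \<ge> 0 \<or> \<bar>c * (a + b)\<bar> > 4 * \<bar>a * b\<bar>
     then \<bar>a + b\<bar> + \<bar>c\<bar>
     else (\<bar>a\<bar> + \<bar>b\<bar>) * sqrt (1 + c^2 / (4 * \<bar>a * b\<bar>)))"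
proof -
  define S where "S = {z :: complex \<times> complex. norm (fst z) \<le> 1 \<and> norm (snd z) \<le> 1}"
  define f where "f z = norm (P2 a b c (fst z) (snd z))" for z
  have ub: "\<forall>z\<in>S. f z \<le> MM a b c" unfolding S_def f_def using bidisk by auto
  have "(0,0) \<in> S" by (simp add: S_def)
  hence ne: "S \<noteq> {}" by auto
  have bdd: "bdd_above (f ` S)" using ub by (auto intro: bdd_aboveI2)
  have ex: "\<exists>z\<in>S. f z = MM a b c"
  proof (cases "a * b \<ge> 0 \<or> \<bar>c * (a + b)\<bar> > 4 * \<bar>a * b\<bar>")
    case True
    then obtain z1 z2 where "cmod z1 \<le> 1 \<and> cmod z2 \<le> 1 \<and> cmod (P2 a b c z1 z2) = \<bar>a+b\<bar>+\<bar>c\<bar>"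
      using wit1 by blast
    thus ?thesis using True unfolding S_def f_def MM_def by (intro bexI[of _ "(z1,z2)"]) auto
  next
    case False
    then obtain z1 z2 where "cmod z1 \<le> 1 \<and> cmod z2 \<le> 1 \<and> cmod (P2 a b c z1 z2) = MM a b c"
      using wit2[of a b c] by force
    thus ?thesis unfolding S_def f_def by (intro bexI[of _ "(z1,z2)"]) auto
  qed
  have "(SUP z\<in>S. f z) = MM a b c"
  proof (rule antisym)
    show "(SUP z\<in>S. f z) \<le> MM a b c" using ne ub by (intro cSUP_least) auto
    obtain z where "z \<in> S" "f z = MM a b c" using ex by blast
    thus "MM a b c \<le> (SUP z\<in>S. f z)" using cSUP_upper[OF _ bdd] by metis
  qed
  thus ?thesis unfolding poly_norm2_def S_def f_def MM_def by simp
qed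

end
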